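(* For every integer $p\ge 3$, the cycle $C_p$ on $p$ vertices satisfies $$\gamma_{[3R]}(C_p)=\begin{cases}\left\lceil \frac{4p}{3}\right\rceil & \text{if } p\in\{4,5,7,10\} \text{ or } p\equiv 0\pmod 3,\\[0.5em] \left\lceil \frac{4p}{3}\right\rceil+1 & \text{if } p\notin\{4,5,7,10\} \text{ and } p\equiv 1,2\pmod 3.\end{cases}$$
   Context: For a graph $\Gamma=(V,E)$ and $h:V\to\{0,1,2,3,4\}$, let $AN(v)=\{w\in N(v):h(w)\ge 1\}$, $AN[v]=AN(v)\cup\{v\}$ and $h(S)=\sum_{u\in S}h(u)$. $h$ is a triple Roman dominating function (3RDF) if every $v$ with $h(v)<3$ satisfies $h(AN[v])\ge|AN(v)|+3$. The triple Roman domination number $\gamma_{[3R]}(\Gamma)$ is the minimum weight $h(V)$ of a 3RDF of $\Gamma$. *)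

theory Defs
  imports Complex_Main
begin

text \<open>A finite simple graph is given by a vertex set V and a symmetric, irreflexive
adjacency relation E. Open neighbourhood of v.\<close>

definition nbhd :: "'a set \<Rightarrow> ('a \<Rightarrow> 'a \<Rightarrow> bool) \<Rightarrow> 'a \<Rightarrow> 'a set" where
  "nbhd V E v = {w \<in> V. E v w}"

definition active_nbhd :: "'a set \<Rightarrow> ('a \<Rightarrow> 'a \<Rightarrow> bool) \<Rightarrow> ('a \<Rightarrow> nat) \<Rightarrow> 'a \<Rightarrow> 'a set" where
  "active_nbhd V E h v = {w \<in> nbhd V E v. h w \<ge> 1}"

text \<open>Triple Roman dominating function: h : V -> {0,..,4} such that every v with
h(v) < 3 satisfies h(AN[v]) >= |AN(v)| + 3. Values outside V are ignored
(only h restricted to V matters).\<close>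
definition is_3RDF :: "'a set \<Rightarrow> ('a \<Rightarrow> 'a \<Rightarrow> bool) \<Rightarrow> ('a \<Rightarrow> nat) \<Rightarrow> bool" where
  "is_3RDF V E h \<longleftrightarrow>
     (\<forall>v\<in>V. h v \<le> 4) \<and>
     (\<forall>v\<in>V. h v < 3 \<longrightarrow>
        sum h (insert v (active_nbhd V E h v)) \<ge> card (active_nbhd V E h v) + 3)"

definition weight :: "'a set \<Rightarrow> ('a \<Rightarrow> nat) \<Rightarrow> nat" where
  "weight V h = sum h V"

definition triple_roman_domination_number :: "'a set \<Rightarrow> ('a \<Rightarrow> 'a \<Rightarrow> bool) \<Rightarrow> nat" where
  "triple_roman_domination_number V E = (LEAST w. \<exists>h. is_3RDF V E h \<and> weight V h = w)"

definition cycle_adj :: "nat \<Rightarrow> nat \<Rightarrow> nat \<Rightarrow> bool" where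
  "cycle_adj p i j \<longleftrightarrow> i \<noteq> j \<and> (j = (i + 1) mod p \<or> i = (j + 1) mod p)"

end

theory Submission
  imports Defs
begin

definition okv :: "nat \<Rightarrow> nat \<Rightarrow> nat \<Rightarrow> bool" where
  "okv a b c \<longleftrightarrow> 3 \<le> b \<or> 3 \<le> b + (a - 1) + (c - 1)"

definition tgt :: "nat \<Rightarrow> nat" where
  "tgt p = (if p \<in> {4, 5, 7, 10} \<or> p mod 3 = 0 then (4*p+2) div 3 else (4*p+2) div 3 + 1)"

lemma ceil_eq: "nat \<lceil>4 * real p / 3\<rceil> = (4*p+2) div 3"
proof -
  define q where "q = (4*p+2) div 3"
  have h1: "3*q \<le> 4*p+2" "4*p \<le> 3*q" unfolding q_def by auto
  have r1: "3 * real q \<le> 4 * real p + 2" using h1(1) by linarith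
  have r2: "4 * real p \<le> 3 * real q" using h1(2) by linarith
  have "\<lceil>4 * real p / 3\<rceil> = int q"
  proof (rule ceiling_unique)
    show "real_of_int (int q) - 1 < 4 * real p / 3" using r1 r2 by simp
    show "4 * real p / 3 \<le> real_of_int (int q)" using r1 r2 by simp
  qed
  thus ?thesis by (simp add: q_def)
qed

lemma succ_mod: "v < p \<Longrightarrow> Suc v mod p = (if v = p - 1 then 0 else Suc v)"
  by (cases "Suc v = p") auto

lemma pred_mod: "v < p \<Longrightarrow> (v + p - Suc 0) mod p = (if v = 0 then p - 1 else v - 1)"
proof (cases "v = 0")
  case False
  assume "v < p"
  then have "v + p - Suc 0 = (v - 1) + p" using False by arith
  then have "(v + p - Suc 0) mod p = (v - 1) mod p" by (metis mod_add_self2)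
  then show ?thesis using False \<open>v < p\<close> by simp
qed simp

lemma dvd_Suc_less: "x < p \<Longrightarrow> p dvd Suc x \<Longrightarrow> x = p - 1"
  using dvd_imp_le[of p "Suc x"] by simp

lemma nbhd_cycle:
  assumes "3 \<le> p" "v < p"
  shows "nbhd {0..<p} (cycle_adj p) v = {(v+1) mod p, (v+p-1) mod p}"
  using assms unfolding nbhd_def cycle_adj_def
  by (auto simp: succ_mod pred_mod dest: dvd_Suc_less split: if_splits)

lemma cond_equiv:
  assumes "v \<noteq> s" "v \<noteq> t" "s \<noteq> t"
  shows "(card {w \<in> {s,t}. 1 \<le> h w} + 3 \<le> sum h (insert v {w \<in> {s,t}. 1 \<le> h w}))
     \<longleftrightarrow> 3 \<le> h v + (h t - 1) + (h s - 1)"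
proof (cases "1 \<le> h s"; cases "1 \<le> h t")
  assume a: "1 \<le> h s" "1 \<le> h t"
  then have e: "{w \<in> {s,t}. 1 \<le> h w} = {s,t}" by auto
  have "sum h (insert v {s,t}) = h v + h s + h t" using assms by simp
  moreover have "card {s,t} = 2" using assms by simp
  ultimately show ?thesis unfolding e using a by linarith
next
  assume a: "1 \<le> h s" "\<not> 1 \<le> h t"
  then have e: "{w \<in> {s,t}. 1 \<le> h w} = {s}" using assms by auto
  have "sum h (insert v {s}) = h v + h s" using assms by simp
  moreover have "card {s} = 1" by simp
  ultimately show ?thesis unfolding e using a by linarith
next
  assume a: "\<not> 1 \<le> h s" "1 \<le> h t"
  then have e: "{w \<in> {s,t}. 1 \<le> h w} = {t}" using assms by auto
  have "sum h (insert v {t}) = h v + h t" using assms by simp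
  moreover have "card {t} = 1" by simp
  ultimately show ?thesis unfolding e using a by linarith
next
  assume a: "\<not> 1 \<le> h s" "\<not> 1 \<le> h t"
  then have e: "{w \<in> {s,t}. 1 \<le> h w} = {}" by auto
  show ?thesis unfolding e using a by simp
qed

lemma is3_iff:
  assumes "3 \<le> p"
  shows "is_3RDF {0..<p} (cycle_adj p) h \<longleftrightarrow>
    (\<forall>v<p. h v \<le> 4) \<and> (\<forall>v<p. okv (h ((v+p-1) mod p)) (h v) (h ((v+1) mod p)))"
proof -
  have key: "(h v < 3 \<longrightarrow> card (active_nbhd {0..<p} (cycle_adj p) h v) + 3
      \<le> sum h (insert v (active_nbhd {0..<p} (cycle_adj p) h v)))
    \<longleftrightarrow> okv (h ((v+p-1) mod p)) (h v) (h ((v+1) mod p))" if "v < p" for v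
  proof -
    have d: "v \<noteq> (v+1) mod p" "v \<noteq> (v+p-1) mod p" "(v+1) mod p \<noteq> (v+p-1) mod p"
      using assms that by (auto simp: succ_mod pred_mod)
    have "active_nbhd {0..<p} (cycle_adj p) h v = {w \<in> {(v+1) mod p, (v+p-1) mod p}. 1 \<le> h w}"
      unfolding active_nbhd_def using nbhd_cycle[OF assms that] by simp
    then show ?thesis using cond_equiv[OF d, of h] unfolding okv_def by auto
  qed
  show ?thesis unfolding is_3RDF_def using key by auto
qed



subsection \<open>Periodic sums\<close>

lemma per_shift1:
  fixes g :: "nat \<Rightarrow> 'a::comm_monoid_add"
  assumes "\<forall>i. g (i+p) = g i"
  shows "(\<Sum>i<p. g (Suc i)) = (\<Sum>i<p. g i)"
proof (cases p)
  case 0 then show ?thesis by simp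
next
  case (Suc n)
  have "(\<Sum>i<p. g (Suc i)) = (\<Sum>i<n. g (Suc i)) + g (Suc n)" using Suc by simp
  also have "g (Suc n) = g 0" using assms[rule_format, of 0] Suc by simp
  also have "(\<Sum>i<n. g (Suc i)) + g 0 = (\<Sum>i<p. g i)"
  proof -
    have "(\<Sum>i<p. g i) = g 0 + (\<Sum>i<n. g (Suc i))" unfolding Suc by (rule sum.lessThan_Suc_shift)
    then show ?thesis by (simp add: add.commute)
  qed
  finally show ?thesis .
qed

lemma per_shift:
  fixes g :: "nat \<Rightarrow> 'a::comm_monoid_add"
  assumes "\<forall>i. g (i+p) = g i"
  shows "(\<Sum>i<p. g (i + k)) = (\<Sum>i<p. g i)"
proof (induction k)
  case 0 then show ?case by simp
next
  case (Suc k)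
  have "\<forall>i. (\<lambda>i. g (i + k)) (i + p) = (\<lambda>i. g (i + k)) i"
  proof
    fix i
    have "g ((i + k) + p) = g (i + k)" using assms by blast
    then show "(\<lambda>i. g (i + k)) (i + p) = (\<lambda>i. g (i + k)) i" by (simp add: ac_simps)
  qed
  from per_shift1[OF this] have "(\<Sum>i<p. g (Suc i + k)) = (\<Sum>i<p. g (i + k))" by simp
  then show ?case using Suc by simp
qed

lemma small5:
  "a \<le> 2 \<Longrightarrow> b \<le> 2 \<Longrightarrow> c \<le> 2 \<Longrightarrow> d \<le> 2 \<Longrightarrow> e \<le> 2 \<Longrightarrow>
   okv a b c \<Longrightarrow> okv b c d \<Longrightarrow> okv c d e \<Longrightarrow> 5 \<le> b + c + d"
  unfolding okv_def by (cases "c = 0"; cases "b = 0"; cases "d = 0") auto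

subsection \<open>Transfer tables\<close>

definition nxt :: "nat \<Rightarrow> nat" where
  "nxt k = (if k + 1 < 10 then k + 1 else 10 + (k + 1 - 10) mod 3)"

definition cls :: "nat \<Rightarrow> nat" where
  "cls n = (if n < 10 then n else 10 + (n - 10) mod 3)"

definition needl :: "int list" where
  "needl = [5, 4, 0, 2, 1, 0, 2, 4, 0, 2, 4, 0, 5]"

definition tbl3 :: "int list list" where
  "tbl3 = [[0, 0, 0, 0, 0, 0, 0, 0, 0, 0, 0, 0, 0, 0, 0, 0, 0, 0, 0, 0, 0, 0, 0, 0, 0],
    [996, 996, 996, 996, 996, 996, 996, 996, 996, 996, 996, 996, 996, 996, 996, -4, -1, 2, 5, 996, 996, 996, 996, 996, 996],
    [992, 992, -2, 1, 992, -5, -2, 1, 4, 992, -2, 1, 4, 7, 992, 1, 4, 7, 10, 992, 992, 992, 992, 992, 992],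
    [988, 988, 3, 3, 988, 0, 3, 3, 3, 988, 0, 3, 0, 3, 988, -3, 0, 3, 6, 988, 988, 988, 988, 988, 988],
    [984, 984, -1, 2, 984, -4, -1, 2, 5, 984, -4, -1, 2, 5, 984, -1, 2, 5, 8, 984, 984, 984, 984, 984, 984],
    [980, 980, 1, 1, 980, -2, 1, 1, 4, 980, -2, 1, 1, 4, 980, -2, 1, 4, 7, 980, 980, 980, 980, 980, 980],
    [976, 976, 0, 3, 976, -3, 0, 3, 6, 976, -3, 0, 3, 6, 976, -3, 0, 3, 6, 976, 976, 976, 976, 976, 976],
    [972, 972, -1, 2, 972, -4, -1, 2, 5, 972, -1, 2, 2, 5, 972, -1, 2, 5, 8, 972, 972, 972, 972, 972, 972],
    [968, 968, 1, 4, 968, -2, 1, 4, 4, 968, -2, 1, 1, 4, 968, -2, 1, 4, 7, 968, 968, 968, 968, 968, 968],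
    [964, 964, 0, 3, 964, -3, 0, 3, 6, 964, -3, 0, 3, 6, 964, 0, 3, 6, 9, 964, 964, 964, 964, 964, 964],
    [960, 960, 2, 2, 960, -1, 2, 2, 5, 960, -1, 2, 2, 5, 960, -1, 2, 5, 8, 960, 960, 960, 960, 960, 960],
    [956, 956, 1, 4, 956, -2, 1, 4, 7, 956, -2, 1, 4, 7, 956, -2, 1, 4, 7, 956, 956, 956, 956, 956, 956],
    [952, 952, 0, 3, 952, -3, 0, 3, 6, 952, 0, 3, 3, 6, 952, 0, 3, 6, 9, 952, 952, 952, 952, 952, 952]]"

definition tbl4 :: "int list list" where
  "tbl4 = [[0, 0, 0, 0, 0, 0, 0, 0, 0, 0, 0, 0, 0, 0, 0, 0, 0, 0, 0, 0, 0, 0, 0, 0, 0],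
    [996, 996, 996, 996, 996, 996, 996, 996, 996, 996, 996, 996, 996, 996, 996, 996, 996, 996, 996, 996, -4, -1, 2, 5, 8],
    [-8, -5, -2, 1, 4, -5, -2, 1, 4, 7, -2, 1, 4, 7, 10, 1, 4, 7, 10, 13, 4, 7, 10, 13, 16],
    [0, 3, 3, 3, 0, 0, 3, 3, 0, 3, 0, 3, 0, 3, 6, -3, 0, 3, 6, 9, 0, 3, 6, 9, 12],
    [-4, -1, -1, 2, 5, -4, -1, 2, 5, 8, -4, -1, 2, 5, 8, -4, -1, 2, 5, 8, -4, -1, 2, 5, 8],
    [-8, -5, -2, 1, 4, -5, -2, 1, 4, 7, -2, 1, 1, 4, 7, -2, 1, 4, 7, 10, 1, 4, 7, 10, 13],
    [-3, 0, 0, 3, 0, -3, 0, 3, 0, 3, -3, 0, 0, 3, 6, -3, 0, 3, 6, 9, 0, 3, 6, 9, 12],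
    [-4, -1, -1, 2, 5, -4, -1, 2, 5, 8, -4, -1, 2, 5, 8, -4, -1, 2, 5, 8, -4, -1, 2, 5, 8],
    [-8, -5, -2, 1, 4, -5, -2, 1, 4, 7, -2, 1, 1, 4, 7, -2, 1, 4, 7, 10, 1, 4, 7, 10, 13],
    [-3, 0, 0, 3, 0, -3, 0, 3, 0, 3, -3, 0, 0, 3, 6, -3, 0, 3, 6, 9, 0, 3, 6, 9, 12],
    [-4, -1, -1, 2, 5, -4, -1, 2, 5, 8, -4, -1, 2, 5, 8, -4, -1, 2, 5, 8, -4, -1, 2, 5, 8],
    [-8, -5, -2, 1, 4, -5, -2, 1, 4, 7, -2, 1, 1, 4, 7, -2, 1, 4, 7, 10, 1, 4, 7, 10, 13],
    [-3, 0, 0, 3, 0, -3, 0, 3, 0, 3, -3, 0, 0, 3, 6, -3, 0, 3, 6, 9, 0, 3, 6, 9, 12]]"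


definition chk_trans :: "nat \<Rightarrow> int list list \<Rightarrow> bool" where
  "chk_trans B T = list_all (\<lambda>k. list_all (\<lambda>a. list_all (\<lambda>b. list_all (\<lambda>c.
      \<not> okv a b c \<or> T!(nxt k)!(5*b+c) \<le> T!k!(5*a+b) + 3 * int c - 4)
      [0..<B+1]) [0..<B+1]) [0..<B+1]) [1..<13]"

definition chk_base :: "nat \<Rightarrow> int list list \<Rightarrow> bool" where
  "chk_base B T = list_all (\<lambda>x. T!1!(5*B+x) \<le> 3 * int x - 4) [0..<B+1]"

definition chk_close :: "nat \<Rightarrow> int list list \<Rightarrow> bool" where
  "chk_close B T = list_all (\<lambda>k. list_all (\<lambda>a. list_all (\<lambda>b.
      \<not> okv a b B \<or> needl!k \<le> 3 * int B - 4 + T!k!(5*a+b))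
      [0..<B+1]) [0..<B+1]) [2..<13]"

lemma chk4: "chk_trans 4 tbl4 \<and> chk_base 4 tbl4 \<and> chk_close 4 tbl4"
  by code_simp

lemma chk3: "chk_trans 3 tbl3 \<and> chk_base 3 tbl3 \<and> chk_close 3 tbl3"
  by code_simp

lemma chk_transD:
  assumes "chk_trans B T" "1 \<le> k" "k < 13" "a \<le> B" "b \<le> B" "c \<le> B" "okv a b c"
  shows "T!(nxt k)!(5*b+c) \<le> T!k!(5*a+b) + 3 * int c - 4"
proof -
  have k: "k \<in> set [1..<13]" and a: "a \<in> set [0..<B+1]" and b: "b \<in> set [0..<B+1]"
    and c: "c \<in> set [0..<B+1]" unfolding set_upt using assms by auto
  from assms(1)[unfolded chk_trans_def list_all_iff, rule_format, OF k a b c]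
  show ?thesis using assms(7) by simp
qed

lemma chk_baseD:
  assumes "chk_base B T" "x \<le> B"
  shows "T!1!(5*B+x) \<le> 3 * int x - 4"
proof -
  have x: "x \<in> set [0..<B+1]" unfolding set_upt using assms by auto
  from assms(1)[unfolded chk_base_def list_all_iff, rule_format, OF x] show ?thesis .
qed

lemma chk_closeD:
  assumes "chk_close B T" "2 \<le> k" "k < 13" "a \<le> B" "b \<le> B" "okv a b B"
  shows "needl!k \<le> 3 * int B - 4 + T!k!(5*a+b)"
proof -
  have k: "k \<in> set [2..<13]" and a: "a \<in> set [0..<B+1]" and b: "b \<in> set [0..<B+1]"
    unfolding set_upt using assms by auto
  from assms(1)[unfolded chk_close_def list_all_iff, rule_format, OF k a b]
  show ?thesis using assms(6) by simp
qed

lemma cls_Suc: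
  assumes "1 \<le> n" shows "cls (Suc n) = nxt (cls n)"
proof -
  consider "n < 9" | "n = 9" | "10 \<le> n" by linarith
  then show ?thesis
  proof cases
    case 1 then show ?thesis by (simp add: cls_def nxt_def)
  next
    case 2 then show ?thesis by (simp add: cls_def nxt_def)
  next
    case 3
    define r where "r = (n - 10) mod 3"
    have r3: "r < 3" unfolding r_def by simp
    have c1: "cls n = 10 + r" using 3 by (simp add: cls_def r_def)
    have "Suc n - 10 = Suc (n - 10)" using 3 by simp
    then have c2: "cls (Suc n) = 10 + Suc r mod 3" using 3 by (simp add: cls_def r_def mod_Suc_eq)
    have "nxt (10 + r) = 10 + Suc r mod 3" by (simp add: nxt_def)
    then show ?thesis using c1 c2 by simp
  qed
qed

lemma cls_range: "1 \<le> n \<Longrightarrow> 1 \<le> cls n \<and> cls n < 13"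
  unfolding cls_def by auto

lemma walk:
  assumes ct: "chk_trans B T" and cb: "chk_base B T"
    and z0: "z 0 = B" and zb: "\<forall>i. z i \<le> B"
    and zok: "\<forall>i. okv (z i) (z (Suc i)) (z (Suc (Suc i)))"
  shows "T!(cls (Suc m))!(5 * z m + z (Suc m))
           \<le> 3 * (\<Sum>i<Suc m. int (z (Suc i))) - 4 * int (Suc m)"
proof (induction m)
  case 0
  show ?case using chk_baseD[OF cb, of "z 1"] zb z0 by (simp add: cls_def)
next
  case (Suc m)
  have r: "1 \<le> cls (Suc m)" "cls (Suc m) < 13" using cls_range[of "Suc m"] by auto
  have tr: "T!(nxt (cls (Suc m)))!(5*z (Suc m) + z (Suc (Suc m)))
     \<le> T!(cls (Suc m))!(5*z m + z (Suc m)) + 3 * int (z (Suc (Suc m))) - 4"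
    using chk_transD[OF ct r] zb zok by blast
  have "cls (Suc (Suc m)) = nxt (cls (Suc m))" by (rule cls_Suc) simp
  then show ?case using Suc.IH tr by simp
qed


lemma need_ok:
  assumes p: "3 \<le> p"
  shows "3 * int (tgt p) - 4 * int p \<le> needl ! cls (p - 1)"
proof (cases "p \<le> 10")
  case True
  then have "p \<in> {3,4,5,6,7,8,9,10}" using p by auto
  then show ?thesis by (auto simp: tgt_def needl_def cls_def)
next
  case False
  define q where "q = (p - 11) div 3"
  define r where "r = (p - 11) mod 3"
  have pq: "p = 11 + 3*q + r" and r3: "r < 3" using False unfolding q_def r_def by auto
  have c: "cls (p - 1) = 10 + r" using False unfolding cls_def r_def by auto
  consider "r = 0" | "r = 1" | "r = 2" using r3 by linarith
  then show ?thesis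
  proof cases
    case 1
    have "tgt p = 16 + 4*q" unfolding tgt_def using pq 1 by (auto; presburger?)
    then show ?thesis using c 1 pq by (simp add: needl_def)
  next
    case 2
    have "tgt p = 16 + 4*q" unfolding tgt_def using pq 2 by (auto; presburger?)
    then show ?thesis using c 2 pq by (simp add: needl_def)
  next
    case 3
    have "tgt p = 19 + 4*q" unfolding tgt_def using pq 3 by (auto; presburger?)
    then show ?thesis using c 3 pq by (simp add: needl_def)
  qed
qed

lemma dp_bound:
  assumes ck1: "chk_trans B T" and ck2: "chk_base B T" and ck3: "chk_close B T"
    and p: "3 \<le> p" and per: "\<forall>i. z (i+p) = z i" and z0: "z 0 = B" and zb: "\<forall>i. z i \<le> B"
    and zok: "\<forall>i. okv (z i) (z (Suc i)) (z (Suc (Suc i)))"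
  shows "tgt p \<le> (\<Sum>i<p. z i)"
proof -
  obtain n where pn: "p = Suc n" using p by (cases p) auto
  have n2: "2 \<le> n" using p pn by simp
  obtain m where nm: "n = Suc m" using n2 by (cases n) auto
  have w: "T!(cls n)!(5 * z m + z n) \<le> 3 * (\<Sum>i<n. int (z (Suc i))) - 4 * int n"
    using walk[OF ck1 ck2 z0 zb zok, of m] nm by simp
  have zp: "z (Suc n) = B" using per[rule_format, of 0] z0 pn by simp
  have okl: "okv (z m) (z n) B" using zok[rule_format, of m] nm zp by simp
  have cr: "2 \<le> cls n" "cls n < 13" using n2 by (auto simp: cls_def)
  have c: "needl ! cls n \<le> 3 * int B - 4 + T!(cls n)!(5 * z m + z n)"
    using chk_closeD[OF ck3 cr _ _ okl] zb by blast
  have nd: "3 * int (tgt p) - 4 * int p \<le> needl ! cls n" using need_ok[OF p] pn by simp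
  have s: "(\<Sum>i<p. int (z i)) = int B + (\<Sum>i<n. int (z (Suc i)))"
    unfolding pn sum.lessThan_Suc_shift using z0 by simp
  have "3 * int (tgt p) \<le> 3 * (\<Sum>i<p. int (z i))" using w c nd s pn by simp
  moreover have eqs: "(\<Sum>i<p. int (z i)) = int (\<Sum>i<p. z i)" by (simp add: of_nat_sum)
  ultimately have "int (tgt p) \<le> int (\<Sum>i<p. z i)" by linarith
  then show ?thesis by (simp only: of_nat_le_iff)
qed

lemma tgt_le: "3 * tgt p \<le> 4 * p + 5"
  unfolding tgt_def by (auto; presburger?)

lemma small_bound:
  assumes p: "3 \<le> p" and per: "\<forall>i. z (i+p) = z i" and zb: "\<forall>i. z i \<le> 2"
    and zok: "\<forall>i. okv (z i) (z (Suc i)) (z (Suc (Suc i)))"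
  shows "tgt p \<le> (\<Sum>i<p. z i)"
proof -
  have T5: "5 \<le> z (Suc i) + z (Suc (Suc i)) + z (Suc (Suc (Suc i)))" for i
    by (rule small5[of "z i" _ _ _ "z (Suc (Suc (Suc (Suc i))))"]) (use zb zok in auto)
  have s1: "(\<Sum>i<p. z (Suc i)) = (\<Sum>i<p. z i)" using per_shift[OF per, of 1] by simp
  have s2: "(\<Sum>i<p. z (Suc (Suc i))) = (\<Sum>i<p. z i)" using per_shift[OF per, of 2] by simp
  have s3: "(\<Sum>i<p. z (Suc (Suc (Suc i)))) = (\<Sum>i<p. z i)" using per_shift[OF per, of 3] by (simp add: numeral_3_eq_3)
  have "(\<Sum>i<p. (5::nat)) \<le> (\<Sum>i<p. z (Suc i) + z (Suc (Suc i)) + z (Suc (Suc (Suc i))))"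
    by (rule sum_mono) (use T5 in auto)
  also have "\<dots> = 3 * (\<Sum>i<p. z i)" using s1 s2 s3 by (simp add: sum.distrib)
  finally have W: "5 * p \<le> 3 * (\<Sum>i<p. z i)" by simp
  consider "p = 3" | "p = 4" | "5 \<le> p" using p by linarith
  then show ?thesis
  proof cases
    case 1 then show ?thesis using W by (simp add: tgt_def)
  next
    case 2 then show ?thesis using W by (simp add: tgt_def)
  next
    case 3 then show ?thesis using W tgt_le[of p] by linarith
  qed
qed

lemma lower_abs:
  assumes p: "3 \<le> p" and per: "\<forall>i. z (i+p) = z i" and zmax: "\<forall>i. z i \<le> z 0" and z4: "z 0 \<le> 4"
    and zok: "\<forall>i. okv (z i) (z (Suc i)) (z (Suc (Suc i)))"
  shows "tgt p \<le> (\<Sum>i<p. z i)"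
proof -
  consider "z 0 \<le> 2" | "z 0 = 3" | "z 0 = 4" using z4 by linarith
  then show ?thesis
  proof cases
    case 1
    then show ?thesis using small_bound[OF p per _ zok] zmax by (meson order_trans)
  next
    case 2
    then show ?thesis using dp_bound[of 3 tbl3 p z] chk3 p per zmax zok by simp
  next
    case 3
    then show ?thesis using dp_bound[of 4 tbl4 p z] chk4 p per zmax zok by simp
  qed
qed

lemma lower:
  assumes p: "3 \<le> p" and h: "is_3RDF {0..<p} (cycle_adj p) h"
  shows "tgt p \<le> sum h {0..<p}"
proof -
  have hb: "\<forall>v<p. h v \<le> 4" and hok: "\<forall>v<p. okv (h ((v+p-1) mod p)) (h v) (h ((v+1) mod p))"
    using h is3_iff[OF p] by auto
  define y where "y i = h (i mod p)" for i
  have p0: "0 < p" using p by simp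
  have yper: "\<forall>i. y (i+p) = y i" by (simp add: y_def)
  have yok: "\<forall>i. okv (y i) (y (Suc i)) (y (Suc (Suc i)))"
  proof
    fix i
    define v where "v = Suc i mod p"
    have vp: "v < p" using p0 unfolding v_def by simp
    have e1: "(v + p - 1) mod p = i mod p"
    proof -
      have "(v + p - 1) mod p = (Suc i mod p + (p - 1)) mod p" unfolding v_def using p0 by simp
      also have "\<dots> = (Suc i + (p - 1)) mod p" by (simp add: mod_add_left_eq)
      also have "Suc i + (p - 1) = i + p" using p0 by simp
      finally show ?thesis by simp
    qed
    have e2: "(v + 1) mod p = Suc (Suc i) mod p"
      unfolding v_def by (simp add: mod_Suc_eq)
    show "okv (y i) (y (Suc i)) (y (Suc (Suc i)))"
      using hok[rule_format, OF vp] unfolding e1 e2 by (simp add: y_def v_def)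
  qed
  have fin: "finite (h ` {0..<p})" and ne: "h ` {0..<p} \<noteq> {}" using p0 by auto
  obtain k0 where k0: "k0 < p" "h k0 = Max (h ` {0..<p})"
    using Max_in[OF fin ne] by auto
  have kmax: "h v \<le> h k0" if "v < p" for v using Max_ge[OF fin] that k0(2) by auto
  define z where "z i = y (i + k0)" for i
  have zper: "\<forall>i. z (i+p) = z i"
  proof
    fix i
    have "y ((i + k0) + p) = y (i + k0)" using yper by blast
    then show "z (i+p) = z i" unfolding z_def by (simp add: ac_simps)
  qed
  have zok: "\<forall>i. okv (z i) (z (Suc i)) (z (Suc (Suc i)))" using yok by (simp add: z_def)
  have z0: "z 0 = h k0" using k0 by (simp add: z_def y_def)
  have zmax: "\<forall>i. z i \<le> z 0"
  proof
    fix i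
    have "(i + k0) mod p < p" using p0 by simp
    then show "z i \<le> z 0" using kmax unfolding z0 by (simp add: z_def y_def)
  qed
  have z4: "z 0 \<le> 4" using hb k0 z0 by simp
  have "sum h {0..<p} = (\<Sum>i<p. y i)"
    by (rule sum.cong) (auto simp: y_def)
  also have "\<dots> = (\<Sum>i<p. z i)" unfolding z_def using per_shift[OF yper, of k0] by simp
  finally show ?thesis using lower_abs[OF p zper zmax z4 zok] by simp
qed


subsection \<open>Constructions\<close>

definition hw :: "nat list \<Rightarrow> nat \<Rightarrow> nat" where
  "hw w i = (if i < length w then w ! i else if (i - length w) mod 3 = 0 then 4 else 0)"

lemma base_sum: "(\<Sum>i<3*j. (if i mod 3 = 0 then 4 else 0::nat)) = 4*j"
proof (induction j)
  case 0 then show ?case by simp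
next
  case (Suc j)
  have e: "3 * Suc j = Suc (Suc (Suc (3*j)))" by simp
  have m1: "Suc (3*j) mod 3 = 1" "Suc (Suc (3*j)) mod 3 = 2" by presburger+
  show ?case unfolding e using Suc m1 by simp
qed

lemma constr:
  assumes pj: "p = length w + 3*j" and j: "1 \<le> j"
    and w0: "w \<noteq> [] \<Longrightarrow> w!0 = 4"
    and wb: "\<forall>v<length w. w!v \<le> 4"
    and wok: "\<forall>v<length w. okv (if v = 0 then 0 else w!(v-1)) (w!v)
                 (if Suc v < length w then w!(Suc v) else 4)"
  shows "is_3RDF {0..<p} (cycle_adj p) (hw w) \<and> sum (hw w) {0..<p} = sum_list w + 4*j"
proof
  define L where "L = length w"
  have p3: "3 \<le> p" using pj j by simp
  have hb: "\<forall>v<p. hw w v \<le> 4" using wb by (auto simp: hw_def)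
  have hok: "okv (hw w ((v+p-1) mod p)) (hw w v) (hw w ((v+1) mod p))" if vp: "v < p" for v
  proof -
    have pm: "(v + p - 1) mod p = (if v = 0 then p - 1 else v - 1)" using pred_mod[OF vp] by simp
    have sm: "(v + 1) mod p = (if v = p - 1 then 0 else Suc v)" using succ_mod[OF vp] by simp
    show ?thesis
    proof (cases "v < L")
      case True
      have P: "hw w ((v+p-1) mod p) = (if v = 0 then 0 else w!(v-1))"
      proof (cases "v = 0")
        case True
        have e: "p - 1 - L = 2 + (j-1)*3" using pj j unfolding L_def by simp
        have "(p - 1 - L) mod 3 = 2" unfolding e mod_mult_self1 by simp
        then show ?thesis using True pm pj j unfolding hw_def L_def by auto
      next
        case False
        then show ?thesis using pm \<open>v < L\<close> unfolding hw_def L_def by auto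
      qed
      have S: "hw w ((v+1) mod p) = (if Suc v < L then w!(Suc v) else 4)"
      proof -
        have "v \<noteq> p - 1" using True pj j unfolding L_def by simp
        then have "(v+1) mod p = Suc v" using sm by simp
        moreover have "Suc v \<le> L" using True by simp
        ultimately show ?thesis unfolding hw_def L_def by auto
      qed
      have V: "hw w v = w!v" using True unfolding hw_def L_def by simp
      have "v < length w" using True unfolding L_def .
      from wok[rule_format, OF this] show ?thesis unfolding P S V L_def .
    next
      case False
      define i where "i = v - L"
      have vi: "v = L + i" using False unfolding i_def by simp
      have ip: "i < 3*j" using vp pj vi unfolding L_def by simp
      consider "i mod 3 = 0" | "i mod 3 = 1" | "i mod 3 = 2" by linarith
      then show ?thesis
      proof cases
        case 1
        have "hw w v = 4" using 1 vi unfolding hw_def L_def by simp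
        then show ?thesis by (simp add: okv_def)
      next
        case 2
        have v0: "v \<noteq> 0" "1 \<le> i" using 2 vi by auto
        have "(v + p - 1) mod p = L + (i - 1)" using pm v0 vi by simp
        moreover have "(i - 1) mod 3 = 0" using 2 v0 by presburger
        ultimately have "hw w ((v+p-1) mod p) = 4" unfolding hw_def L_def by simp
        then show ?thesis by (simp add: okv_def)
      next
        case 3
        have "hw w ((v+1) mod p) = 4"
        proof (cases "v = p - 1")
          case True
          then have "(v+1) mod p = 0" using sm by simp
          then show ?thesis using w0 unfolding hw_def by (cases w) auto
        next
          case False
          then have "(v+1) mod p = L + Suc i" using sm vi by simp
          moreover have "Suc i mod 3 = 0" using 3 by (simp add: mod_Suc)
          ultimately show ?thesis unfolding hw_def L_def by simp
        qed
        then show ?thesis by (simp add: okv_def)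
      qed
    qed
  qed
  show "is_3RDF {0..<p} (cycle_adj p) (hw w)"
    unfolding is3_iff[OF p3] using hb hok by blast
next
  define L where "L = length w"
  have "sum (hw w) {0..<p} = sum (hw w) {0..<L} + sum (hw w) {L..<L + 3*j}"
    using pj unfolding L_def by (simp add: sum.atLeastLessThan_concat)
  also have "sum (hw w) {0..<L} = sum_list w"
    unfolding sum_list_sum_nth L_def by (rule sum.cong) (auto simp: hw_def)
  also have "sum (hw w) {L..<L + 3*j} = (\<Sum>i<3*j. (if i mod 3 = 0 then 4 else 0::nat))"
  proof -
    have "sum (hw w) {0 + L..<3*j + L} = sum (\<lambda>i. hw w (i + L)) {0..<3*j}"
      by (rule sum.shift_bounds_nat_ivl)
    also have "\<dots> = (\<Sum>i<3*j. (if i mod 3 = 0 then 4 else 0::nat))"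
      unfolding atLeast0LessThan by (rule sum.cong) (auto simp: hw_def L_def)
    finally show ?thesis by (simp add: add.commute)
  qed
  finally show "sum (hw w) {0..<p} = sum_list w + 4*j" using base_sum by simp
qed

lemma word_ok:
  assumes "p = length w" "3 \<le> p" "\<forall>v<p. w!v \<le> 4"
    "\<forall>v<p. okv (w!((v+p-1) mod p)) (w!v) (w!((v+1) mod p))"
  shows "is_3RDF {0..<p} (cycle_adj p) (\<lambda>i. w!i) \<and> sum (\<lambda>i. w!i) {0..<p} = sum_list w"
  using assms by (simp add: is3_iff sum_list_sum_nth)


lemma all_lt_list: "(\<forall>v<n. P v) = list_all P [0..<n]"
  by (auto simp: list_all_iff)

lemma word_case:
  assumes "p = length w" "3 \<le> p" "list_all (\<lambda>v. w!v \<le> 4) [0..<p]"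
    "list_all (\<lambda>v. okv (w!((v+p-1) mod p)) (w!v) (w!((v+1) mod p))) [0..<p]"
    "sum_list w = tgt p"
  shows "\<exists>h. is_3RDF {0..<p} (cycle_adj p) h \<and> sum h {0..<p} = tgt p"
  using word_ok[OF assms(1,2)] assms(3,4,5) unfolding all_lt_list by auto

lemma constr_case:
  assumes "p = length w + 3*j" "1 \<le> j" "w \<noteq> [] \<Longrightarrow> w!0 = 4"
    "list_all (\<lambda>v. w!v \<le> 4) [0..<length w]"
    "list_all (\<lambda>v. okv (if v = 0 then 0 else w!(v-1)) (w!v)
                 (if Suc v < length w then w!(Suc v) else 4)) [0..<length w]"
    "sum_list w + 4*j = tgt p"
  shows "\<exists>h. is_3RDF {0..<p} (cycle_adj p) h \<and> sum h {0..<p} = tgt p"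
  using constr[OF assms(1,2,3)] assms(4,5,6) unfolding all_lt_list by auto

lemma upper:
  assumes p: "3 \<le> p"
  shows "\<exists>h. is_3RDF {0..<p} (cycle_adj p) h \<and> sum h {0..<p} = tgt p"
proof -
  consider "p = 4" | "p = 5" | "p = 7" | "p = 10" | "p mod 3 = 0"
    | "p mod 3 = 2" "p \<noteq> 5" | "p mod 3 = 1" "p \<noteq> 4" "p \<noteq> 7" "p \<noteq> 10" by linarith
  then show ?thesis
  proof cases
    case 1
    show ?thesis unfolding 1 by (rule word_case[of 4 "[0,3,0,3]"]) code_simp+
  next
    case 2
    show ?thesis unfolding 2 by (rule word_case[of 5 "[3,0,2,2,0]"]) code_simp+
  next
    case 3
    show ?thesis unfolding 3 by (rule word_case[of 7 "[0,2,2,0,3,0,3]"]) code_simp+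
  next
    case 4
    show ?thesis unfolding 4 by (rule word_case[of 10 "[3,0,2,2,0,3,0,2,2,0]"]) code_simp+
  next
    case 5
    define j where "j = p div 3"
    have pj: "p = length ([]::nat list) + 3*j" using 5 unfolding j_def by (simp; presburger)
    have j1: "1 \<le> j" using p unfolding j_def by simp
    have t: "sum_list ([]::nat list) + 4*j = tgt p" using 5 unfolding tgt_def j_def by (auto; presburger?)
    show ?thesis by (rule constr_case[OF pj j1 _ _ _ t]) simp_all
  next
    case 6
    define j where "j = (p - 5) div 3"
    have p8: "8 \<le> p" using 6 p by presburger
    have pj: "p = length [4,0,1,3,0::nat] + 3*j" using 6 p8 unfolding j_def by (simp; presburger)
    have j1: "1 \<le> j" using p8 unfolding j_def by simp
    have t: "sum_list [4,0,1,3,0::nat] + 4*j = tgt p" using 6 pj unfolding tgt_def by (auto; presburger?)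
    show ?thesis by (rule constr_case[OF pj j1 _ _ _ t]) code_simp+
  next
    case 7
    define j where "j = (p - 7) div 3"
    have p13: "13 \<le> p" using 7 p by presburger
    have pj: "p = length [4,0,1,3,0,3,0::nat] + 3*j" using 7 p13 unfolding j_def by (simp; presburger)
    have j1: "1 \<le> j" using p13 unfolding j_def by simp
    have t: "sum_list [4,0,1,3,0,3,0::nat] + 4*j = tgt p" using 7 pj unfolding tgt_def by (auto; presburger?)
    show ?thesis by (rule constr_case[OF pj j1 _ _ _ t]) code_simp+
  qed
qed

theorem proposition22:
  fixes p :: nat
  assumes "p \<ge> 3"
  shows "triple_roman_domination_number {0..<p} (cycle_adj p) =
    (if p \<in> {4, 5, 7, 10} \<or> p mod 3 = 0
     then nat \<lceil>4 * real p / 3\<rceil>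
     else nat \<lceil>4 * real p / 3\<rceil> + 1)"
proof -
  have rhs: "(if p \<in> {4, 5, 7, 10} \<or> p mod 3 = 0
     then nat \<lceil>4 * real p / 3\<rceil>
     else nat \<lceil>4 * real p / 3\<rceil> + 1) = tgt p"
    unfolding ceil_eq tgt_def by simp
  have "triple_roman_domination_number {0..<p} (cycle_adj p) = tgt p"
    unfolding triple_roman_domination_number_def
  proof (rule Least_equality)
    show "\<exists>h. is_3RDF {0..<p} (cycle_adj p) h \<and> weight {0..<p} h = tgt p"
      using upper[OF assms] by (simp add: weight_def)
  next
    fix y assume "\<exists>h. is_3RDF {0..<p} (cycle_adj p) h \<and> weight {0..<p} h = y"
    then obtain h where "is_3RDF {0..<p} (cycle_adj p) h" "weight {0..<p} h = y" by blast
    then show "tgt p \<le> y" using lower[OF assms] by (auto simp: weight_def)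
  qed
  then show ?thesis using rhs by simp
qed

end
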